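(* Let $\mathcal{H}$ be a separable complex Hilbert space, $U$ a unitary operator on $\mathcal{H}$ with spectral measure $E(\cdot)$, $\mu$ a finite positive Borel measure on $\mathbb{T}$, and $C$ a conjugation on $\mathcal{H}$ with $CUC = U$. Then (a) $C\mathcal{H}_\mu = \mathcal{H}_{\mu^c}$ and $C\mathcal{H}_\mu^\perp = \mathcal{H}_{\mu^c}^\perp$; and thus (b) $C = C_{\mu,\mu^c}\oplus C'_{\mu,\mu^c}$, where $C_{\mu,\mu^c} = C|_{\mathcal{H}_\mu}:\mathcal{H}_\mu\to\mathcal{H}_{\mu^c}$ and $C'_{\mu,\mu^c} = C|_{\mathcal{H}_\mu^\perp}:\mathcal{H}_\mu^\perp\to\mathcal{H}_{\mu^c}^\perp$ are antilinear surjective isometries.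
   Context: A conjugation is an antilinear, isometric map $C$ with $C^2=I$. $E(\cdot)$ is the spectral measure of $U$ ($U=\int\xi\,dE(\xi)$). For $x\in\mathcal{H}$, $\mu_x$ is the finite positive Borel measure $\mu_x(\Omega) = \langle E(\Omega)x, x\rangle$. For a finite positive Borel measure $\mu$ on $\mathbb{T}$, $\mathcal{H}_\mu := \{x\in\mathcal{H} : \mu_x \ll \mu\}$ (a closed reducing subspace of $U$), and $\mu^c(\Omega) := \mu(\{\overline{\xi}:\xi\in\Omega\})$. *)

theory Defs
  imports "HOL-Analysis.Analysis" "HOL-Probability.Probability"
begin

text \<open>A complex Hilbert space is modelled as a real Banach space 'h together with a
complex scalar multiplication smul (extending scaleR) and a complex inner product ip
(linear in the first, conjugate-linear in the second argument) inducing the norm.\<close>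

definition complex_hilbert :: "(complex \<Rightarrow> 'h::banach \<Rightarrow> 'h) \<Rightarrow> ('h \<Rightarrow> 'h \<Rightarrow> complex) \<Rightarrow> bool" where
  "complex_hilbert smul ip \<longleftrightarrow>
     (\<forall>a x y. smul a (x + y) = smul a x + smul a y) \<and>
     (\<forall>a b x. smul (a + b) x = smul a x + smul b x) \<and>
     (\<forall>a b x. smul (a * b) x = smul a (smul b x)) \<and>
     (\<forall>r x. smul (complex_of_real r) x = r *\<^sub>R x) \<and>
     (\<forall>x y z. ip (x + y) z = ip x z + ip y z) \<and>
     (\<forall>a x y. ip (smul a x) y = a * ip x y) \<and>
     (\<forall>x y. ip y x = cnj (ip x y)) \<and>
     (\<forall>x. ip x x = complex_of_real ((norm x)\<^sup>2))"

definition separable_hspace :: "'h::topological_space itself \<Rightarrow> bool" where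
  "separable_hspace _ \<longleftrightarrow> (\<exists>D::'h set. countable D \<and> closure D = UNIV)"

definition clinear_map :: "(complex \<Rightarrow> 'h::banach \<Rightarrow> 'h) \<Rightarrow> ('h \<Rightarrow> 'h) \<Rightarrow> bool" where
  "clinear_map smul f \<longleftrightarrow> (\<forall>x y. f (x + y) = f x + f y) \<and> (\<forall>a x. f (smul a x) = smul a (f x))"

definition unitary_op :: "(complex \<Rightarrow> 'h::banach \<Rightarrow> 'h) \<Rightarrow> ('h \<Rightarrow> 'h \<Rightarrow> complex) \<Rightarrow> ('h \<Rightarrow> 'h) \<Rightarrow> bool" where
  "unitary_op smul ip U \<longleftrightarrow> clinear_map smul U \<and> surj U \<and> (\<forall>x y. ip (U x) (U y) = ip x y)"

definition conjugation :: "(complex \<Rightarrow> 'h::banach \<Rightarrow> 'h) \<Rightarrow> ('h \<Rightarrow> 'h) \<Rightarrow> bool" where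
  "conjugation smul C \<longleftrightarrow>
     (\<forall>x y. C (x + y) = C x + C y) \<and> (\<forall>a x. C (smul a x) = smul (cnj a) (C x)) \<and>
     (\<forall>x. norm (C x) = norm x) \<and> (\<forall>x. C (C x) = x)"

definition orth_projection :: "(complex \<Rightarrow> 'h::banach \<Rightarrow> 'h) \<Rightarrow> ('h \<Rightarrow> 'h \<Rightarrow> complex) \<Rightarrow> ('h \<Rightarrow> 'h) \<Rightarrow> bool" where
  "orth_projection smul ip P \<longleftrightarrow> clinear_map smul P \<and> (\<forall>x. P (P x) = P x) \<and> (\<forall>x y. ip (P x) y = ip x (P y))"

abbreviation circle_borel :: "complex measure" where
  "circle_borel \<equiv> restrict_space borel (sphere 0 1)"

definition pv_measure :: "(complex \<Rightarrow> 'h::banach \<Rightarrow> 'h) \<Rightarrow> ('h \<Rightarrow> 'h \<Rightarrow> complex) \<Rightarrow> (complex set \<Rightarrow> 'h \<Rightarrow> 'h) \<Rightarrow> bool" where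
  "pv_measure smul ip E \<longleftrightarrow>
     (\<forall>\<Omega>\<in>sets circle_borel. orth_projection smul ip (E \<Omega>)) \<and>
     E {} = (\<lambda>x. 0) \<and> E (sphere 0 1) = id \<and>
     (\<forall>A\<in>sets circle_borel. \<forall>B\<in>sets circle_borel. E (A \<inter> B) = E A \<circ> E B) \<and>
     (\<forall>A::nat \<Rightarrow> complex set. range A \<subseteq> sets circle_borel \<longrightarrow> disjoint_family A \<longrightarrow>
        (\<forall>x. (\<lambda>n. E (A n) x) sums E (\<Union>n. A n) x))"

definition spec_meas :: "('h \<Rightarrow> 'h \<Rightarrow> complex) \<Rightarrow> (complex set \<Rightarrow> 'h \<Rightarrow> 'h) \<Rightarrow> 'h \<Rightarrow> complex measure" where
  "spec_meas ip E x = measure_of (sphere 0 1) (sets circle_borel) (\<lambda>\<Omega>. ennreal (Re (ip (E \<Omega> x) x)))"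

text \<open>E is the spectral measure of U, i.e. U = \<integral> xi dE(xi) (weakly: <Ux,x> = \<integral> xi d mu_x).\<close>
definition spectral_measure_of :: "(complex \<Rightarrow> 'h::banach \<Rightarrow> 'h) \<Rightarrow> ('h \<Rightarrow> 'h \<Rightarrow> complex) \<Rightarrow> ('h \<Rightarrow> 'h) \<Rightarrow> (complex set \<Rightarrow> 'h \<Rightarrow> 'h) \<Rightarrow> bool" where
  "spectral_measure_of smul ip U E \<longleftrightarrow> pv_measure smul ip E \<and>
     (\<forall>x. ip (U x) x = (\<integral>\<xi>. \<xi> \<partial>(spec_meas ip E x)))"

definition H_sub :: "('h \<Rightarrow> 'h \<Rightarrow> complex) \<Rightarrow> (complex set \<Rightarrow> 'h \<Rightarrow> 'h) \<Rightarrow> complex measure \<Rightarrow> 'h set" where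
  "H_sub ip E M = {x. absolutely_continuous M (spec_meas ip E x)}"

definition conj_measure :: "complex measure \<Rightarrow> complex measure" where
  "conj_measure M = distr M M cnj"

definition orth_compl :: "('h \<Rightarrow> 'h \<Rightarrow> complex) \<Rightarrow> 'h set \<Rightarrow> 'h set" where
  "orth_compl ip S = {y. \<forall>x\<in>S. ip x y = 0}"

end

theory Submission
  imports Defs
begin

locale chs =
  fixes smul :: "complex \<Rightarrow> 'h::banach \<Rightarrow> 'h" and ip :: "'h \<Rightarrow> 'h \<Rightarrow> complex"
  assumes hilb: "complex_hilbert smul ip"
begin

lemma smul_add: "smul a (x + y) = smul a x + smul a y"
  and smul_add_left: "smul (a + b) x = smul a x + smul b x"
  and smul_mult: "smul (a * b) x = smul a (smul b x)"
  and smul_real: "smul (complex_of_real r) x = r *\<^sub>R x"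
  and ip_add_left: "ip (x + y) z = ip x z + ip y z"
  and ip_smul_left: "ip (smul a x) y = a * ip x y"
  and ip_sym: "ip y x = cnj (ip x y)"
  and ip_self: "ip x x = complex_of_real ((norm x)\<^sup>2)"
  using hilb unfolding complex_hilbert_def by blast+

lemma smul_zero[simp]: "smul a 0 = 0"
  using smul_add[of a 0 0] by simp
lemma smul_minus: "smul a (- x) = - smul a x"
  using smul_add[of a x "-x"] by (metis minus_unique right_minus smul_zero)
lemma smul_diff: "smul a (x - y) = smul a x - smul a y"
  using smul_add[of a x "-y"] smul_minus by simp
lemma smul_one[simp]: "smul 1 x = x"
  using smul_real[of 1 x] by simp
lemma ip_add_right: "ip x (y + z) = ip x y + ip x z"
  by (metis ip_sym ip_add_left complex_cnj_add)
lemma ip_smul_right: "ip x (smul a y) = cnj a * ip x y"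
  by (metis ip_sym ip_smul_left complex_cnj_mult)
lemma ip_zero_left[simp]: "ip 0 y = 0"
  using ip_add_left[of 0 0 y] by simp
lemma ip_zero_right[simp]: "ip x 0 = 0"
  using ip_add_right[of x 0 0] by simp
lemma ip_minus_left: "ip (- x) y = - ip x y"
  using ip_add_left[of x "-x" y] by (metis minus_unique right_minus ip_zero_left)
lemma ip_minus_right: "ip x (- y) = - ip x y"
  using ip_add_right[of x y "-y"] by (metis minus_unique right_minus ip_zero_right)
lemma ip_diff_left: "ip (x - y) z = ip x z - ip y z"
  using ip_add_left[of x "-y" z] ip_minus_left by simp
lemma ip_diff_right: "ip x (y - z) = ip x y - ip x z"
  using ip_add_right[of x y "-z"] ip_minus_right by simp
lemma Re_ip_self: "Re (ip x x) = (norm x)\<^sup>2"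
  by (simp add: ip_self)
lemma ip_self_eq0: "ip x x = 0 \<Longrightarrow> x = 0"
  by (simp add: ip_self)

lemma norm_add_sq: "(norm (x + y))\<^sup>2 = (norm x)\<^sup>2 + (norm y)\<^sup>2 + 2 * Re (ip x y)"
proof -
  have "(norm (x + y))\<^sup>2 = Re (ip (x + y) (x + y))" by (rule Re_ip_self[symmetric])
  also have "\<dots> = Re (ip x x) + Re (ip x y) + Re (ip y x) + Re (ip y y)"
    by (simp add: ip_add_left ip_add_right)
  finally show ?thesis by (simp add: Re_ip_self ip_sym[of x y])
qed

lemma norm_diff_sq: "(norm (x - y))\<^sup>2 = (norm x)\<^sup>2 + (norm y)\<^sup>2 - 2 * Re (ip x y)"
  using norm_add_sq[of x "-y"] by (simp add: ip_minus_right)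

lemma pythag: "ip x y = 0 \<Longrightarrow> (norm (x + y))\<^sup>2 = (norm x)\<^sup>2 + (norm y)\<^sup>2"
  by (simp add: norm_add_sq)

lemma norm_smul: "norm (smul a x) = cmod a * norm x"
proof -
  have "(norm (smul a x))\<^sup>2 = Re (ip (smul a x) (smul a x))" by (rule Re_ip_self[symmetric])
  also have "ip (smul a x) (smul a x) = (a * cnj a) * ip x x"
    by (simp add: ip_smul_left ip_smul_right)
  also have "\<dots> = complex_of_real ((cmod a)\<^sup>2 * (norm x)\<^sup>2)"
    by (simp add: ip_self complex_mult_cnj cmod_power2)
  finally have "(norm (smul a x))\<^sup>2 = (cmod a * norm x)\<^sup>2" by (simp add: power_mult_distrib)
  thus ?thesis by (simp add: power2_eq_iff_nonneg)
qed

lemma Re_ip_polar: "Re (ip x y) = ((norm (x + y))\<^sup>2 - (norm x)\<^sup>2 - (norm y)\<^sup>2) / 2"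
  by (simp add: norm_add_sq)

lemma Im_ip: "Im (ip x y) = Re (ip x (smul \<i> y))"
  by (simp add: ip_smul_right)

lemma smul_minus_one: "smul (-1) x = - x"
  using smul_real[of "-1" x] by simp

end

definition "antiisom smul C \<longleftrightarrow> (\<forall>x y. C (x + y) = C x + C y) \<and> (\<forall>a x. C (smul a x) = smul (cnj a) (C x)) \<and>
     (\<forall>x. norm (C x) = norm x)"

context chs begin

lemma conj_ip:
  assumes "antiisom smul C"
  shows "ip (C x) (C y) = cnj (ip x y)"
proof -
  have add: "\<And>x y. C (x + y) = C x + C y" and sm: "\<And>a x. C (smul a x) = smul (cnj a) (C x)"
    and nm: "\<And>x. norm (C x) = norm x" using assms unfolding antiisom_def by blast+
  have re: "\<And>x y. Re (ip (C x) (C y)) = Re (ip x y)"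
    by (simp add: Re_ip_polar add[symmetric] nm)
  have "Im (ip (C x) (C y)) = Re (ip (C x) (smul \<i> (C y)))" by (rule Im_ip)
  also have "smul \<i> (C y) = C (smul (-\<i>) y)" by (simp add: sm)
  also have "Re (ip (C x) (C (smul (-\<i>) y))) = Re (ip x (smul (-\<i>) y))" by (rule re)
  also have "\<dots> = - Im (ip x y)" by (simp add: ip_smul_right)
  finally show ?thesis using re[of x y] by (simp add: complex_eq_iff)
qed

end

lemma conjugation_antiisom: "conjugation smul C \<Longrightarrow> antiisom smul C"
  unfolding conjugation_def antiisom_def by blast

lemma sums_additive_cont:
  fixes f :: "'a::real_normed_vector \<Rightarrow> 'b::real_normed_vector"
  assumes add: "\<And>a b. f (a + b) = f a + f b" and cont: "continuous_on UNIV f" and g: "g sums s"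
  shows "(\<lambda>n. f (g n)) sums f s"
proof -
  have f0: "f 0 = 0" using add[of 0 0] by simp
  have ps: "(\<Sum>i<n. f (g i)) = f (\<Sum>i<n. g i)" for n
    by (induction n) (simp_all add: f0 add)
  have "(\<lambda>n. f (\<Sum>i<n. g i)) \<longlonglongrightarrow> f s"
    using g unfolding sums_def
    by (rule continuous_on_tendsto_compose[OF cont]) auto
  thus ?thesis unfolding sums_def ps .
qed

context chs begin

lemma proj_add: "orth_projection smul ip P \<Longrightarrow> P (x + y) = P x + P y"
  and proj_smul: "orth_projection smul ip P \<Longrightarrow> P (smul a x) = smul a (P x)"
  and proj_idem: "orth_projection smul ip P \<Longrightarrow> P (P x) = P x"
  and proj_sa: "orth_projection smul ip P \<Longrightarrow> ip (P x) y = ip x (P y)"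
  unfolding orth_projection_def clinear_map_def by blast+

lemma proj_zero: "orth_projection smul ip P \<Longrightarrow> P 0 = 0"
  using proj_add[of P 0 0] by simp
lemma proj_minus: "orth_projection smul ip P \<Longrightarrow> P (- x) = - P x"
  using proj_add[of P x "-x"] proj_zero[of P] by (metis minus_unique right_minus)
lemma proj_diff: "orth_projection smul ip P \<Longrightarrow> P (x - y) = P x - P y"
  using proj_add[of P x "-y"] proj_minus[of P y] by simp

lemma proj_orth: "orth_projection smul ip P \<Longrightarrow> ip (P x) (y - P y) = 0"
  by (simp add: proj_sa proj_diff proj_idem)
lemma proj_orth': "orth_projection smul ip P \<Longrightarrow> ip (x - P x) (P y) = 0"
  by (simp add: proj_sa[symmetric] proj_diff proj_idem)

lemma proj_pythag: "orth_projection smul ip P \<Longrightarrow> (norm x)\<^sup>2 = (norm (P x))\<^sup>2 + (norm (x - P x))\<^sup>2"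
  using pythag[of "P x" "x - P x"] proj_orth[of P x x] by simp

lemma proj_norm_le: "orth_projection smul ip P \<Longrightarrow> norm (P x) \<le> norm x"
  using proj_pythag[of P x] by (metis le_add_same_cancel1 norm_ge_zero power2_le_imp_le zero_le_power2)

lemma ip_proj: "orth_projection smul ip P \<Longrightarrow> ip (P x) x = complex_of_real ((norm (P x))\<^sup>2)"
  by (metis ip_self proj_idem proj_sa)

lemma Re_ip_cont: "continuous_on UNIV (\<lambda>y. Re (ip y x))"
proof -
  have "continuous_on UNIV (\<lambda>y. ((norm (y + x))\<^sup>2 - (norm y)\<^sup>2 - (norm x)\<^sup>2) / 2)"
    by (intro continuous_intros) auto
  thus ?thesis by (simp add: Re_ip_polar)
qed

end

abbreviation SS :: "complex set" where "SS \<equiv> sphere 0 1"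

lemma BB_iff: "A \<in> sets circle_borel \<longleftrightarrow> A \<subseteq> SS \<and> A \<in> sets borel"
  by (rule sets_restrict_space_iff) auto

lemma space_cb[simp]: "space circle_borel = SS"
  by (simp add: space_restrict_space)

lemma BB_empty[simp]: "{} \<in> sets circle_borel" by simp
lemma BB_S[simp]: "SS \<in> sets circle_borel" using sets.top[of circle_borel] by simp

locale pvm = chs smul ip for smul :: "complex \<Rightarrow> 'h::banach \<Rightarrow> 'h" and ip +
  fixes E :: "complex set \<Rightarrow> 'h \<Rightarrow> 'h"
  assumes pvm: "pv_measure smul ip E"
begin

lemma E_proj: "A \<in> sets circle_borel \<Longrightarrow> orth_projection smul ip (E A)"
  and E_empty0: "E {} = (\<lambda>x. 0)" and E_S0: "E SS = id"
  and E_Int0: "A \<in> sets circle_borel \<Longrightarrow> B \<in> sets circle_borel \<Longrightarrow> E (A \<inter> B) = E A \<circ> E B"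
  and E_sums: "range F \<subseteq> sets circle_borel \<Longrightarrow> disjoint_family F \<Longrightarrow> (\<lambda>n. E (F n) x) sums E (\<Union>n. F n) x"
  using pvm unfolding pv_measure_def by blast+

lemma E_empty[simp]: "E {} x = 0" by (simp add: E_empty0)
lemma E_S[simp]: "E SS x = x" by (simp add: E_S0)
lemma E_Int: "A \<in> sets circle_borel \<Longrightarrow> B \<in> sets circle_borel \<Longrightarrow> E (A \<inter> B) x = E A (E B x)"
  by (simp add: E_Int0)
lemma E_comm: "A \<in> sets circle_borel \<Longrightarrow> B \<in> sets circle_borel \<Longrightarrow> E A (E B x) = E B (E A x)"
  by (metis E_Int Int_commute)
lemma E_idem: "A \<in> sets circle_borel \<Longrightarrow> E A (E A x) = E A x"
  using E_proj proj_idem by blast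

lemma E_Un:
  assumes A: "A \<in> sets circle_borel" and B: "B \<in> sets circle_borel" and d: "A \<inter> B = {}"
  shows "E (A \<union> B) x = E A x + E B x"
proof -
  define F where "F n = (if n = 0 then A else if n = Suc 0 then B else {})" for n :: nat
  have r: "range F \<subseteq> sets circle_borel" using A B by (auto simp: F_def)
  have df: "disjoint_family F" using d unfolding disjoint_family_on_def F_def by auto
  have U: "(\<Union>n. F n) = A \<union> B"
  proof
    show "(\<Union>n. F n) \<subseteq> A \<union> B" by (auto simp: F_def split: if_splits)
    show "A \<union> B \<subseteq> (\<Union>n. F n)"
    proof
      fix z assume "z \<in> A \<union> B"
      moreover have "F 0 = A" "F (Suc 0) = B" by (simp_all add: F_def)
      ultimately show "z \<in> (\<Union>n. F n)" by blast
    qed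
  qed
  have s1: "(\<lambda>n. E (F n) x) sums E (A \<union> B) x" using E_sums[OF r df] U by simp
  have s2: "(\<lambda>n. E (F n) x) sums (\<Sum>n\<in>{0, Suc 0}. E (F n) x)"
    by (rule sums_finite) (auto simp: F_def)
  have "(\<Sum>n\<in>{0, Suc 0}. E (F n) x) = E A x + E B x" by (simp add: F_def)
  thus ?thesis using sums_unique2[OF s1 s2] by simp
qed

lemma E_compl: "A \<in> sets circle_borel \<Longrightarrow> E (SS - A) x = x - E A x"
proof -
  assume A: "A \<in> sets circle_borel"
  hence A': "SS - A \<in> sets circle_borel" by auto
  have "A \<subseteq> SS" using A BB_iff by blast
  hence "A \<union> (SS - A) = SS" by blast
  thus ?thesis using E_Un[OF A A', of x] by (simp add: algebra_simps)
qed

lemma E_orth: "A \<in> sets circle_borel \<Longrightarrow> B \<in> sets circle_borel \<Longrightarrow> A \<inter> B = {} \<Longrightarrow> ip (E A x) (E B y) = 0"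
  by (metis E_Int E_empty E_proj ip_zero_right proj_sa)

lemma E_norm_le: "A \<in> sets circle_borel \<Longrightarrow> norm (E A x) \<le> norm x"
  using E_proj proj_norm_le by blast

lemma cb_pow: "sets circle_borel \<subseteq> Pow SS"
  using sets.space_closed[of circle_borel] by simp

lemma cb_sa: "sigma_algebra SS (sets circle_borel)"
    using sets.sigma_algebra_axioms[of circle_borel] by simp

lemma sm_sets[simp]: "sets (spec_meas ip E x) = sets circle_borel"
  unfolding spec_meas_def using cb_pow cb_sa by (simp add: sigma_algebra.sigma_sets_eq)

lemma sm_space[simp]: "space (spec_meas ip E x) = SS"
  unfolding spec_meas_def using cb_pow by (simp add: space_measure_of_conv)

lemma sm_emeasure:
  assumes A: "A \<in> sets circle_borel"
  shows "emeasure (spec_meas ip E x) A = ennreal ((norm (E A x))\<^sup>2)"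
proof -
  have sa: "sigma_algebra SS (sets circle_borel)"
    using sets.sigma_algebra_axioms[of circle_borel] by simp
  have eq: "Re (ip (E B x) x) = (norm (E B x))\<^sup>2" if "B \<in> sets circle_borel" for B
    using ip_proj[OF E_proj[OF that]] by simp
  have pos: "positive (sets circle_borel) (\<lambda>\<Omega>. ennreal (Re (ip (E \<Omega> x) x)))"
    unfolding positive_def by simp
  have ca: "countably_additive (sets circle_borel) (\<lambda>\<Omega>. ennreal (Re (ip (E \<Omega> x) x)))"
    unfolding countably_additive_def
  proof (intro allI impI)
    fix F :: "nat \<Rightarrow> complex set"
    assume r: "range F \<subseteq> sets circle_borel" and df: "disjoint_family F" and U: "\<Union> (range F) \<in> sets circle_borel"
    have s: "(\<lambda>n. Re (ip (E (F n) x) x)) sums Re (ip (E (\<Union>n. F n) x) x)"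
      by (rule sums_additive_cont[where f = "\<lambda>y. Re (ip y x)", OF _ Re_ip_cont E_sums[OF r df]])
         (simp add: ip_add_left)
    have nn: "\<And>n. 0 \<le> Re (ip (E (F n) x) x)" using eq r by auto
    have "(\<Sum>n. ennreal (Re (ip (E (F n) x) x))) = ennreal (\<Sum>n. Re (ip (E (F n) x) x))"
      using nn s by (intro suminf_ennreal2) (auto simp: sums_iff)
    also have "\<dots> = ennreal (Re (ip (E (\<Union>n. F n) x) x))" using s by (simp add: sums_iff)
    finally show "(\<Sum>n. ennreal (Re (ip (E (F n) x) x))) = ennreal (Re (ip (E (\<Union> (range F)) x) x))" by simp
  qed
  have "emeasure (spec_meas ip E x) A = ennreal (Re (ip (E A x) x))"
    unfolding spec_meas_def by (rule emeasure_measure_of_sigma[OF sa pos ca A])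
  thus ?thesis using eq[OF A] by simp
qed

lemma sm_finite: "finite_measure (spec_meas ip E x)"
  by (rule finite_measureI) (simp add: sm_emeasure)

lemma sm_measure: "A \<in> sets circle_borel \<Longrightarrow> measure (spec_meas ip E x) A = (norm (E A x))\<^sup>2"
  by (simp add: measure_def sm_emeasure)

lemma sm_integrable:
  fixes f :: "complex \<Rightarrow> 'b::{banach, second_countable_topology}"
  assumes f: "f \<in> borel_measurable borel" and b: "\<And>z. z \<in> SS \<Longrightarrow> norm (f z) \<le> K"
  shows "integrable (spec_meas ip E x) f"
proof -
  interpret finite_measure "spec_meas ip E x" by (rule sm_finite)
  have fm: "f \<in> borel_measurable (spec_meas ip E x)"
    by (subst measurable_cong_sets[OF sm_sets refl]) (rule measurable_restrict_space1[OF f])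
  show ?thesis
    by (rule integrable_const_bound[where B = K]) (use b fm in auto)
qed

end

context pvm begin

lemma sm_density:
  assumes A: "A \<in> sets circle_borel"
  shows "spec_meas ip E (E A w) = density (spec_meas ip E w) (\<lambda>\<xi>. ennreal (indicator A \<xi>))"
proof (rule measure_eqI)
  show "sets (spec_meas ip E (E A w)) = sets (density (spec_meas ip E w) (\<lambda>\<xi>. ennreal (indicator A \<xi>)))"
    by simp
  fix C assume "C \<in> sets (spec_meas ip E (E A w))"
  hence C: "C \<in> sets circle_borel" by simp
  have Am: "(\<lambda>\<xi>. ennreal (indicator A \<xi> :: real)) \<in> borel_measurable (spec_meas ip E w)"
    using A by (intro measurable_compose[OF _ measurable_ennreal] borel_measurable_indicator) simp
  have "emeasure (density (spec_meas ip E w) (\<lambda>\<xi>. ennreal (indicator A \<xi>))) C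
      = (\<integral>\<^sup>+ \<xi>. ennreal (indicator A \<xi>) * indicator C \<xi> \<partial>spec_meas ip E w)"
    by (rule emeasure_density[OF Am]) (simp add: C)
  also have "\<dots> = (\<integral>\<^sup>+ \<xi>. indicator (C \<inter> A) \<xi> \<partial>spec_meas ip E w)"
    by (intro nn_integral_cong) (auto split: split_indicator)
  also have "\<dots> = emeasure (spec_meas ip E w) (C \<inter> A)"
    using A C by (intro nn_integral_indicator) auto
  also have "\<dots> = ennreal ((norm (E (C \<inter> A) w))\<^sup>2)"
    using A C by (intro sm_emeasure) auto
  also have "\<dots> = emeasure (spec_meas ip E (E A w)) C"
    using A C by (simp add: sm_emeasure E_Int)
  finally show "emeasure (spec_meas ip E (E A w)) C = emeasure (density (spec_meas ip E w) (\<lambda>\<xi>. ennreal (indicator A \<xi>))) C"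
    by simp
qed

lemma sm_integral_E:
  fixes f :: "complex \<Rightarrow> 'b::{banach, second_countable_topology}"
  assumes A: "A \<in> sets circle_borel" and f: "f \<in> borel_measurable borel"
  shows "integral\<^sup>L (spec_meas ip E (E A w)) f = integral\<^sup>L (spec_meas ip E w) (\<lambda>\<xi>. indicator A \<xi> *\<^sub>R f \<xi>)"
proof -
  have fm: "f \<in> borel_measurable (spec_meas ip E w)"
    by (subst measurable_cong_sets[OF sm_sets refl]) (rule measurable_restrict_space1[OF f])
  have Am: "(indicator A :: complex \<Rightarrow> real) \<in> borel_measurable (spec_meas ip E w)"
    using A by (intro borel_measurable_indicator) simp
  show ?thesis
    unfolding sm_density[OF A]
    by (rule integral_density[OF fm Am]) simp
qed

lemma sm_integral_split:
  fixes f :: "complex \<Rightarrow> 'b::{banach, second_countable_topology}"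
  assumes A: "A \<in> sets circle_borel" and f: "f \<in> borel_measurable borel"
    and b: "\<And>z. z \<in> SS \<Longrightarrow> norm (f z) \<le> K"
  shows "integral\<^sup>L (spec_meas ip E w) f
       = integral\<^sup>L (spec_meas ip E (E A w)) f + integral\<^sup>L (spec_meas ip E (E (SS - A) w)) f"
proof -
  have A': "SS - A \<in> sets circle_borel" using A by auto
  have Ab: "A \<in> sets borel" "SS - A \<in> sets borel" using A A' BB_iff by blast+
  have "norm (f 1) \<le> K" using b[of 1] by simp
  hence K: "0 \<le> K" by (meson norm_ge_zero order_trans)
  have i1: "integrable (spec_meas ip E w) (\<lambda>\<xi>. indicator A \<xi> *\<^sub>R f \<xi>)"
    by (rule sm_integrable[where K = K]) (use Ab f b K in \<open>auto simp: indicator_def\<close>)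
  have i2: "integrable (spec_meas ip E w) (\<lambda>\<xi>. indicator (SS - A) \<xi> *\<^sub>R f \<xi>)"
    by (rule sm_integrable[where K = K]) (use Ab f b K in \<open>auto simp: indicator_def\<close>)
  have "integral\<^sup>L (spec_meas ip E w) f = integral\<^sup>L (spec_meas ip E w) (\<lambda>\<xi>. indicator A \<xi> *\<^sub>R f \<xi> + indicator (SS - A) \<xi> *\<^sub>R f \<xi>)"
    by (rule Bochner_Integration.integral_cong[OF refl]) (auto simp: indicator_def)
  also have "\<dots> = integral\<^sup>L (spec_meas ip E w) (\<lambda>\<xi>. indicator A \<xi> *\<^sub>R f \<xi>) + integral\<^sup>L (spec_meas ip E w) (\<lambda>\<xi>. indicator (SS - A) \<xi> *\<^sub>R f \<xi>)"
    by (rule Bochner_Integration.integral_add[OF i1 i2])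
  finally show ?thesis using sm_integral_E[OF A f] sm_integral_E[OF A' f] by simp
qed

end

locale spvm = pvm smul ip E for smul :: "complex \<Rightarrow> 'h::banach \<Rightarrow> 'h" and ip E +
  fixes U :: "'h \<Rightarrow> 'h"
  assumes unit: "unitary_op smul ip U"
    and specU: "\<And>x. ip (U x) x = (\<integral>\<xi>. \<xi> \<partial>(spec_meas ip E x))"
begin

lemma U_add: "U (x + y) = U x + U y" and U_smul: "U (smul a x) = smul a (U x)"
  and U_ip: "ip (U x) (U y) = ip x y"
  using unit unfolding unitary_op_def clinear_map_def by blast+

lemma U_norm: "norm (U x) = norm x"
proof -
  have "(norm (U x))\<^sup>2 = (norm x)\<^sup>2" by (metis Re_ip_self U_ip)
  thus ?thesis by (simp add: power2_eq_iff_nonneg)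
qed

lemma U_zero: "U 0 = 0" using U_add[of 0 0] by simp
lemma U_minus: "U (- x) = - U x" using U_add[of x "-x"] U_zero by (metis minus_unique right_minus)
lemma U_diff: "U (x - y) = U x - U y" using U_add[of x "-y"] U_minus[of y] by simp

lemma Q_split:
  assumes A: "A \<in> sets circle_borel"
  shows "ip (U w) w = ip (U (E A w)) (E A w) + ip (U (E (SS - A) w)) (E (SS - A) w)"
  using sm_integral_split[OF A, of "\<lambda>\<xi>. \<xi>" 1 w] by (simp add: specU)

lemma U_comm:
  assumes A: "A \<in> sets circle_borel"
  shows "U (E A x) = E A (U x)"
proof -
  have P: "orth_projection smul ip (E A)" by (rule E_proj[OF A])
  have key: "ip (U u) v = 0 \<and> ip (U v) u = 0" if u: "E A u = u" and v: "E A v = 0" for u v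
  proof -
    have Q: "ip (U (u + v')) (u + v') = ip (U u) u + ip (U v') v'" if v': "E A v' = 0" for v'
    proof -
      have "E A (u + v') = u" using u v' proj_add[OF P] by simp
      moreover have "E (SS - A) (u + v') = v'" using E_compl[OF A] \<open>E A (u + v') = u\<close> by simp
      ultimately show ?thesis using Q_split[OF A, of "u + v'"] by simp
    qed
    have iv: "E A (smul \<i> v) = 0" using proj_smul[OF P] v by simp
    have e1: "ip (U u) v + ip (U v) u = 0"
      using Q[OF v] by (simp add: U_add ip_add_left ip_add_right algebra_simps)
    have e2: "- \<i> * ip (U u) v + \<i> * ip (U v) u = 0"
      using Q[OF iv] by (simp add: U_add U_smul ip_add_left ip_add_right ip_smul_left ip_smul_right algebra_simps)
    have b: "ip (U v) u = - ip (U u) v" using e1 by (simp add: eq_neg_iff_add_eq_0 add.commute)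
    have "(2 * \<i>) * ip (U u) v = 0" using e2 unfolding b by (simp add: algebra_simps)
    hence "ip (U u) v = 0" by simp
    with e1 show ?thesis by simp
  qed
  have k1: "ip (U (E A x)) (y - E A y) = 0" for x y
    using key[of "E A x" "y - E A y"] by (simp add: E_idem[OF A] proj_diff[OF P])
  have k2: "ip (U (y - E A y)) (E A x) = 0" for x y
    using key[of "E A x" "y - E A y"] by (simp add: E_idem[OF A] proj_diff[OF P])
  define z where "z = U (E A x) - E A (U (E A x))"
  have "ip (U (E A x)) z = 0" unfolding z_def by (rule k1)
  moreover have "ip (E A (U (E A x))) z = 0" unfolding z_def by (rule proj_orth[OF P])
  ultimately have "ip z z = 0" by (simp add: z_def ip_diff_left)
  hence "z = 0" by (rule ip_self_eq0)
  hence z0: "U (E A x) = E A (U (E A x))" by (simp add: z_def)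
  define w where "w = U (x - E A x)"
  have "ip w (E A w) = 0" unfolding w_def by (rule k2)
  hence "ip (E A w) (E A w) = 0" by (simp add: proj_sa[OF P, symmetric] E_idem[OF A])
  hence "E A w = 0" by (rule ip_self_eq0)
  hence "E A (U x) = E A (U (E A x))" unfolding w_def by (simp add: U_diff proj_diff[OF P])
  with z0 show ?thesis by simp
qed

end

lemma circ_dist_sq:
  fixes \<xi> l :: complex
  assumes "cmod \<xi> = 1" "cmod l = 1"
  shows "(cmod (\<xi> - l))\<^sup>2 = 2 - 2 * Re (cnj l * \<xi>)"
proof -
  have a: "(Re \<xi>)\<^sup>2 + (Im \<xi>)\<^sup>2 = 1" "(Re l)\<^sup>2 + (Im l)\<^sup>2 = 1"
    using assms by (simp_all add: cmod_power2[symmetric])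
  show ?thesis using a by (simp add: cmod_power2 power2_diff algebra_simps)
qed

lemma circ_dist_le4:
  fixes \<xi> l :: complex
  assumes "cmod \<xi> = 1" "cmod l = 1"
  shows "(cmod (\<xi> - l))\<^sup>2 \<le> 4"
proof -
  have "cmod (\<xi> - l) \<le> 2" using norm_triangle_ineq4[of \<xi> l] assms by simp
  hence "(cmod (\<xi> - l))\<^sup>2 \<le> 2\<^sup>2" by (intro power_mono) simp_all
  thus ?thesis by simp
qed

context spvm begin

lemma normT:
  assumes l: "cmod l = 1"
  shows "(norm (U y - smul l y))\<^sup>2 = (\<integral>\<xi>. (cmod (\<xi> - l))\<^sup>2 \<partial>spec_meas ip E y)"
proof -
  have int1: "integrable (spec_meas ip E y) (\<lambda>\<xi>. cnj l * \<xi>)"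
    by (rule sm_integrable[where K = 1]) (auto simp: norm_mult l)
  have int2: "integrable (spec_meas ip E y) (\<lambda>\<xi>. 2 * Re (cnj l * \<xi>))"
    using integrable_mult_right[OF integrable_Re[OF int1], of 2] by simp
  have "(\<integral>\<xi>. (cmod (\<xi> - l))\<^sup>2 \<partial>spec_meas ip E y) = (\<integral>\<xi>. 2 - 2 * Re (cnj l * \<xi>) \<partial>spec_meas ip E y)"
    by (rule Bochner_Integration.integral_cong[OF refl]) (simp add: circ_dist_sq l)
  also have "\<dots> = (\<integral>\<xi>. 2 \<partial>spec_meas ip E y) - (\<integral>\<xi>. 2 * Re (cnj l * \<xi>) \<partial>spec_meas ip E y)"
    by (rule Bochner_Integration.integral_diff[OF finite_measure.integrable_const[OF sm_finite] int2])
  also have "(\<integral>\<xi>. 2 * Re (cnj l * \<xi>) \<partial>spec_meas ip E y) = 2 * Re (cnj l * (\<integral>\<xi>. \<xi> \<partial>spec_meas ip E y))"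
    by (simp only: integral_mult_right_zero integral_Re[OF int1])
  also have "(\<integral>\<xi>. 2 \<partial>spec_meas ip E y) = 2 * measure (spec_meas ip E y) SS"
    by simp
  finally have eq1: "(\<integral>\<xi>. (cmod (\<xi> - l))\<^sup>2 \<partial>spec_meas ip E y) = 2 * measure (spec_meas ip E y) SS - 2 * Re (cnj l * (\<integral>\<xi>. \<xi> \<partial>spec_meas ip E y))" .
  have "(\<integral>\<xi>. (cmod (\<xi> - l))\<^sup>2 \<partial>spec_meas ip E y) = 2 * (norm y)\<^sup>2 - 2 * Re (cnj l * ip (U y) y)"
    unfolding eq1 by (simp only: sm_measure[OF BB_S] E_S specU)
  also have "\<dots> = (norm (U y - smul l y))\<^sup>2"
    by (simp add: norm_diff_sq U_norm norm_smul l ip_smul_right)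
  finally show ?thesis ..
qed

lemma T_upper:
  assumes l: "cmod l = 1" and A: "A \<in> sets circle_borel" and y: "E A y = y"
    and r: "\<And>\<xi>. \<xi> \<in> A \<Longrightarrow> cmod (\<xi> - l) \<le> r"
  shows "(norm (U y - smul l y))\<^sup>2 \<le> r\<^sup>2 * (norm y)\<^sup>2"
proof -
  have Ab: "A \<in> sets borel" using A BB_iff by blast
  have "(norm (U y - smul l y))\<^sup>2 = (\<integral>\<xi>. (cmod (\<xi> - l))\<^sup>2 \<partial>spec_meas ip E (E A y))"
    using normT[OF l, of y] y by simp
  also have "\<dots> = (\<integral>\<xi>. indicator A \<xi> *\<^sub>R (cmod (\<xi> - l))\<^sup>2 \<partial>spec_meas ip E y)"
    by (rule sm_integral_E[OF A]) simp
  also have "\<dots> \<le> (\<integral>\<xi>. r\<^sup>2 \<partial>spec_meas ip E y)"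
  proof (rule integral_mono)
    show "integrable (spec_meas ip E y) (\<lambda>\<xi>. indicator A \<xi> *\<^sub>R (cmod (\<xi> - l))\<^sup>2)"
      by (rule sm_integrable[where K = 4]) (use Ab circ_dist_le4[OF _ l] in \<open>auto simp: indicator_def\<close>)
    show "integrable (spec_meas ip E y) (\<lambda>\<xi>. r\<^sup>2)"
      by (rule sm_integrable[where K = "r\<^sup>2"]) auto
    fix \<xi> show "indicator A \<xi> *\<^sub>R (cmod (\<xi> - l))\<^sup>2 \<le> r\<^sup>2"
      using r[of \<xi>] by (auto simp: indicator_def intro!: power_mono)
  qed
  also have "\<dots> = r\<^sup>2 * (norm y)\<^sup>2"
    by (simp add: sm_measure)
  finally show ?thesis .
qed

lemma T_lower:
  assumes l: "cmod l = 1" and B: "B \<in> sets circle_borel" and y: "E B y = y"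
    and d: "\<And>\<xi>. \<xi> \<in> B \<Longrightarrow> d \<le> cmod (\<xi> - l)" and d0: "0 \<le> d"
  shows "d\<^sup>2 * (norm y)\<^sup>2 \<le> (norm (U y - smul l y))\<^sup>2"
proof -
  have Bb: "B \<in> sets borel" using B BB_iff by blast
  have "d\<^sup>2 * (norm y)\<^sup>2 = (\<integral>\<xi>. d\<^sup>2 \<partial>spec_meas ip E (E B y))"
    using y by (simp add: sm_measure)
  also have "\<dots> = (\<integral>\<xi>. indicator B \<xi> *\<^sub>R d\<^sup>2 \<partial>spec_meas ip E y)"
    by (rule sm_integral_E[OF B]) simp
  also have "\<dots> \<le> (\<integral>\<xi>. indicator B \<xi> *\<^sub>R (cmod (\<xi> - l))\<^sup>2 \<partial>spec_meas ip E y)"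
  proof (rule integral_mono)
    show "integrable (spec_meas ip E y) (\<lambda>\<xi>. indicator B \<xi> *\<^sub>R (cmod (\<xi> - l))\<^sup>2)"
      by (rule sm_integrable[where K = 4]) (use Bb circ_dist_le4[OF _ l] in \<open>auto simp: indicator_def\<close>)
    show "integrable (spec_meas ip E y) (\<lambda>\<xi>. indicator B \<xi> *\<^sub>R d\<^sup>2)"
      by (rule sm_integrable[where K = "d\<^sup>2"]) (use Bb in \<open>auto simp: indicator_def\<close>)
    fix \<xi> show "indicator B \<xi> *\<^sub>R d\<^sup>2 \<le> indicator B \<xi> *\<^sub>R (cmod (\<xi> - l))\<^sup>2"
      using d[of \<xi>] d0 by (auto simp: indicator_def intro!: power_mono)
  qed
  also have "\<dots> = (\<integral>\<xi>. (cmod (\<xi> - l))\<^sup>2 \<partial>spec_meas ip E (E B y))"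
    by (rule sm_integral_E[OF B, symmetric]) simp
  also have "\<dots> = (norm (U y - smul l y))\<^sup>2"
    using normT[OF l, of y] y by simp
  finally show ?thesis .
qed

end

lemma geom_zero:
  fixes a b r d :: real
  assumes r0: "0 \<le> r" and rd: "r < d" and a0: "0 \<le> a" and h: "\<And>n. d ^ n * a \<le> r ^ n * b"
  shows "a = 0"
proof -
  have d0: "0 < d" using r0 rd by simp
  have q: "\<bar>r / d\<bar> < 1" using r0 rd d0 by simp
  have lim: "(\<lambda>n. (r / d) ^ n * b) \<longlonglongrightarrow> 0"
    by (rule tendsto_mult_left_zero[OF LIMSEQ_power_zero]) (use q in simp)
  have "a \<le> (r / d) ^ n * b" for n
  proof -
    have "d ^ n > 0" using d0 by simp
    hence "a \<le> r ^ n * b / d ^ n" using h[of n] by (simp add: pos_le_divide_eq mult.commute)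
    thus ?thesis by (simp add: power_divide)
  qed
  hence "a \<le> 0" by (intro LIMSEQ_le_const[OF lim]) auto
  with a0 show ?thesis by simp
qed

locale two_spvm = S1: spvm smul ip E U + S2: spvm smul ip E2 U
  for smul :: "complex \<Rightarrow> 'h::banach \<Rightarrow> 'h" and ip E E2 U
begin

lemma sep1:
  assumes l: "cmod l = 1" and A: "A \<in> sets circle_borel" and B: "B \<in> sets circle_borel"
    and r: "\<And>\<xi>. \<xi> \<in> A \<Longrightarrow> cmod (\<xi> - l) \<le> r"
    and d: "\<And>\<xi>. \<xi> \<in> B \<Longrightarrow> d \<le> cmod (\<xi> - l)"
    and r0: "0 \<le> r" and rd: "r < d"
  shows "E2 B (E A x) = 0"
proof -
  define T where "T w = U w - smul l w" for w
  have Tw: "T w = U w - smul l w" for w by (simp add: T_def)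
  have PA: "orth_projection smul ip (E A)" by (rule S1.E_proj[OF A])
  have PB: "orth_projection smul ip (E2 B)" by (rule S2.E_proj[OF B])
  have TA: "E A (T w) = T (E A w)" for w
    by (simp add: T_def S1.proj_diff[OF PA] S1.proj_smul[OF PA] S1.U_comm[OF A])
  have TB: "E2 B (T w) = T (E2 B w)" for w
    by (simp add: T_def S1.proj_diff[OF PB] S1.proj_smul[OF PB] S2.U_comm[OF B])
  define y where "y = E A x"
  define z where "z = E2 B y"
  have inA: "E A ((T ^^ n) y) = (T ^^ n) y" for n
    by (induction n) (simp_all add: y_def S1.E_idem[OF A] TA)
  have up: "norm ((T ^^ n) y) \<le> r ^ n * norm y" for n
  proof (induction n)
    case 0 then show ?case by simp
  next
    case (Suc n)
    let ?w = "(T ^^ n) y"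
    have "(norm (T ?w))\<^sup>2 \<le> r\<^sup>2 * (norm ?w)\<^sup>2"
      unfolding Tw[of ?w] by (rule S1.T_upper[OF l A inA r])
    hence "(norm (T ?w))\<^sup>2 \<le> (r * norm ?w)\<^sup>2" by (simp add: power_mult_distrib)
    hence "norm (T ?w) \<le> r * norm ?w" by (rule power2_le_imp_le) (use r0 in simp)
    also have "\<dots> \<le> r * (r ^ n * norm y)" by (rule mult_left_mono[OF Suc r0])
    finally show ?case by simp
  qed
  have comm: "(T ^^ n) z = E2 B ((T ^^ n) y)" for n
    by (induction n) (simp_all add: z_def TB)
  have inB: "E2 B ((T ^^ n) z) = (T ^^ n) z" for n
    by (simp add: comm S2.E_idem[OF B])
  have d0: "0 \<le> d" using r0 rd by simp
  have low: "d ^ n * norm z \<le> norm ((T ^^ n) z)" for n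
  proof (induction n)
    case 0 then show ?case by simp
  next
    case (Suc n)
    let ?w = "(T ^^ n) z"
    have "d\<^sup>2 * (norm ?w)\<^sup>2 \<le> (norm (T ?w))\<^sup>2"
      unfolding Tw[of ?w] by (rule S2.T_lower[OF l B inB d d0])
    hence "(d * norm ?w)\<^sup>2 \<le> (norm (T ?w))\<^sup>2" by (simp add: power_mult_distrib)
    hence "d * norm ?w \<le> norm (T ?w)" by (rule power2_le_imp_le) simp
    moreover have "d * (d ^ n * norm z) \<le> d * norm ?w" by (rule mult_left_mono[OF Suc d0])
    ultimately show ?case by simp
  qed
  have "d ^ n * norm z \<le> r ^ n * norm y" for n
  proof -
    have "norm ((T ^^ n) z) \<le> norm ((T ^^ n) y)"
      unfolding comm by (rule S2.E_norm_le[OF B])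
    thus ?thesis using low[of n] up[of n] by linarith
  qed
  hence "norm z = 0" by (intro geom_zero[OF r0 rd]) auto
  thus ?thesis by (simp add: z_def y_def)
qed

lemma sep:
  assumes A: "A \<in> sets circle_borel" and B: "B \<in> sets circle_borel" and dl: "0 < dl"
    and sepr: "\<And>a b. a \<in> A \<Longrightarrow> b \<in> B \<Longrightarrow> dl \<le> cmod (a - b)"
  shows "E2 B (E A x) = 0"
proof -
  have PB: "orth_projection smul ip (E2 B)" by (rule S2.E_proj[OF B])
  obtain L where LS: "L \<subseteq> SS" and fL: "finite L" and cov: "SS \<subseteq> (\<Union>c\<in>L. ball c (dl / 3))"
  proof (rule compactE_image[of SS SS "\<lambda>c. ball c (dl / 3)"])
    show "compact SS" by simp
    show "open (ball c (dl / 3))" for c by simp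
    show "SS \<subseteq> (\<Union>c\<in>SS. ball c (dl / 3))"
    proof
      fix w assume "w \<in> SS" thus "w \<in> (\<Union>c\<in>SS. ball c (dl / 3))" using dl by (intro UN_I[of w]) auto
    qed
  qed auto
  have main: "\<forall>A'. A' \<in> sets circle_borel \<longrightarrow> A' \<subseteq> A \<longrightarrow> A' \<subseteq> (\<Union>c\<in>L'. cball c (dl / 3)) \<longrightarrow> E2 B (E A' x) = 0"
    if "finite L'" "L' \<subseteq> SS" for L'
    using that
  proof (induction L' rule: finite_induct)
    case empty
    then show ?case by (simp add: S1.proj_zero[OF PB])
  next
    case (insert l L')
    show ?case
    proof (intro allI impI)
      fix A' assume A': "A' \<in> sets circle_borel" and sub: "A' \<subseteq> A" and cv: "A' \<subseteq> (\<Union>c\<in>insert l L'. cball c (dl / 3))"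
      have cb: "cball l (dl / 3) \<in> sets borel" by simp
      have A1: "A' \<inter> cball l (dl / 3) \<in> sets circle_borel" using A' cb BB_iff by blast
      have A2: "A' - cball l (dl / 3) \<in> sets circle_borel" using A' cb BB_iff by blast
      have un: "A' = (A' \<inter> cball l (dl / 3)) \<union> (A' - cball l (dl / 3))" by blast
      have "E A' x = E (A' \<inter> cball l (dl / 3)) x + E (A' - cball l (dl / 3)) x"
        by (subst un, rule S1.E_Un[OF A1 A2]) blast
      hence split: "E2 B (E A' x) = E2 B (E (A' \<inter> cball l (dl / 3)) x) + E2 B (E (A' - cball l (dl / 3)) x)"
        by (simp add: S1.proj_add[OF PB])
      have LS': "L' \<subseteq> SS" using insert.prems by simp
      have cv2: "A' - cball l (dl / 3) \<subseteq> (\<Union>c\<in>L'. cball c (dl / 3))" using cv by blast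
      have sub2: "A' - cball l (dl / 3) \<subseteq> A" using sub by blast
      have z2: "E2 B (E (A' - cball l (dl / 3)) x) = 0"
        using insert.IH[OF LS'] A2 sub2 cv2 by simp
      have z1: "E2 B (E (A' \<inter> cball l (dl / 3)) x) = 0"
      proof (cases "A' \<inter> cball l (dl / 3) = {}")
        case True
        then show ?thesis by (simp add: S1.proj_zero[OF PB])
      next
        case False
        then obtain a where a: "a \<in> A'" "dist l a \<le> dl / 3" by auto
        have l1: "cmod l = 1" using insert.prems by simp
        show ?thesis
        proof (rule sep1[OF l1 A1 B, where r = "dl / 3" and d = "2 * dl / 3"])
          show "cmod (\<xi> - l) \<le> dl / 3" if "\<xi> \<in> A' \<inter> cball l (dl / 3)" for \<xi>
            using that by (simp add: dist_norm norm_minus_commute)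
          show "2 * dl / 3 \<le> cmod (b - l)" if "b \<in> B" for b
          proof -
            have "dl \<le> cmod (a - b)" using sepr[of a b] a sub that by blast
            also have "\<dots> \<le> cmod (a - l) + cmod (b - l)"
              using norm_triangle_ineq4[of "a - l" "b - l"] by simp
            finally show ?thesis using a(2) by (simp add: dist_norm norm_minus_commute)
          qed
        qed (use dl in auto)
      qed
      show "E2 B (E A' x) = 0" using split z1 z2 by simp
    qed
  qed
  have "A \<subseteq> SS" using A BB_iff by blast
  also have "\<dots> \<subseteq> (\<Union>c\<in>L. ball c (dl / 3))" by (rule cov)
  also have "\<dots> \<subseteq> (\<Union>c\<in>L. cball c (dl / 3))" by (intro UN_mono) auto
  finally have "A \<subseteq> (\<Union>c\<in>L. cball c (dl / 3))" .
  thus ?thesis using main[OF fL LS] A by blast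
qed

end

context two_spvm begin

lemma closed_le:
  assumes Fc: "closed F" and FS: "F \<subseteq> SS"
  shows "(norm (E2 F x))\<^sup>2 \<le> (norm (E F x))\<^sup>2"
proof (cases "F = {}")
  case True
  then show ?thesis by simp
next
  case Fne: False
  have FB: "F \<in> sets circle_borel" using Fc FS BB_iff borel_closed by blast
  have PF: "orth_projection smul ip (E2 F)" by (rule S2.E_proj[OF FB])
  define G where "G n = {\<xi> \<in> SS. infdist \<xi> F < 1 / Suc n}" for n :: nat
  have Gb: "G n \<in> sets circle_borel" for n
  proof -
    have "open {\<xi>. infdist \<xi> F < 1 / Suc n}"
      by (intro open_Collect_less continuous_intros)
    hence "{\<xi>. infdist \<xi> F < 1 / Suc n} \<in> sets borel" by (rule borel_open)
    hence "SS \<inter> {\<xi>. infdist \<xi> F < 1 / Suc n} \<in> sets borel" by (intro sets.Int) auto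
    moreover have "G n = SS \<inter> {\<xi>. infdist \<xi> F < 1 / Suc n}" by (auto simp: G_def)
    ultimately show ?thesis using BB_iff by auto
  qed
  have bound: "(norm (E2 F x))\<^sup>2 \<le> measure (spec_meas ip E x) (G n)" for n
  proof -
    have Bn: "SS - G n \<in> sets circle_borel" using Gb[of n] by auto
    have z: "E2 F (E (SS - G n) x) = 0"
    proof (rule sep[OF Bn FB, where dl = "1 / Suc n"])
      fix a b assume a: "a \<in> SS - G n" and b: "b \<in> F"
      have "1 / Suc n \<le> infdist a F" using a by (auto simp: G_def)
      also have "\<dots> \<le> dist a b" by (rule infdist_le[OF b])
      finally show "1 / Suc n \<le> cmod (a - b)" by (simp add: dist_norm)
    qed simp
    have "x = E (G n) x + E (SS - G n) x" by (simp add: S1.E_compl[OF Gb])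
    hence "E2 F x = E2 F (E (G n) x) + E2 F (E (SS - G n) x)"
      by (metis S1.proj_add[OF PF])
    hence "E2 F x = E2 F (E (G n) x)" using z by simp
    hence "norm (E2 F x) \<le> norm (E (G n) x)" using S2.E_norm_le[OF FB] by metis
    hence "(norm (E2 F x))\<^sup>2 \<le> (norm (E (G n) x))\<^sup>2" by (intro power_mono) simp_all
    thus ?thesis by (simp add: S1.sm_measure[OF Gb])
  qed
  have dec: "decseq G"
    unfolding decseq_def G_def
  proof (intro allI impI subsetI)
    fix m n :: nat and \<xi> assume mn: "m \<le> n" and \<xi>: "\<xi> \<in> {\<xi> \<in> SS. infdist \<xi> F < 1 / Suc n}"
    have "1 / real (Suc n) \<le> 1 / Suc m" using mn by (intro divide_left_mono) auto
    thus "\<xi> \<in> {\<xi> \<in> SS. infdist \<xi> F < 1 / Suc m}" using \<xi> by auto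
  qed
  have IG: "(\<Inter>n. G n) = F"
  proof
    show "F \<subseteq> (\<Inter>n. G n)" using FS by (auto simp: G_def infdist_zero)
    show "(\<Inter>n. G n) \<subseteq> F"
    proof
      fix \<xi> assume \<xi>: "\<xi> \<in> (\<Inter>n. G n)"
      have "infdist \<xi> F = 0"
      proof (rule ccontr)
        assume "infdist \<xi> F \<noteq> 0"
        hence "infdist \<xi> F > 0" using infdist_nonneg[of \<xi> F] by simp
        then obtain n where "inverse (real (Suc n)) < infdist \<xi> F"
          using reals_Archimedean by blast
        hence "1 / Suc n < infdist \<xi> F" by (simp add: inverse_eq_divide)
        moreover have "infdist \<xi> F < 1 / Suc n" using \<xi> by (auto simp: G_def)
        ultimately show False by simp
      qed
      hence "\<xi> \<in> closure F" using in_closure_iff_infdist_zero[OF Fne] by simp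
      thus "\<xi> \<in> F" using Fc by (simp add: closure_closed)
    qed
  qed
  interpret fm: finite_measure "spec_meas ip E x" by (rule S1.sm_finite)
  have lim: "(\<lambda>n. measure (spec_meas ip E x) (G n)) \<longlonglongrightarrow> measure (spec_meas ip E x) F"
    using fm.finite_Lim_measure_decseq[of G] Gb dec IG by auto
  have "(norm (E2 F x))\<^sup>2 \<le> measure (spec_meas ip E x) F"
    by (rule LIMSEQ_le_const[OF lim]) (use bound in auto)
  thus ?thesis by (simp add: S1.sm_measure[OF FB])
qed

end

lemma two_spvm_sym: "two_spvm smul ip E E2 U \<Longrightarrow> two_spvm smul ip E2 E U"
  unfolding two_spvm_def by blast

context two_spvm begin

lemma closed_eq:
  assumes Fc: "closed F" and FS: "F \<subseteq> SS"
  shows "norm (E2 F x) = norm (E F x)"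
proof -
  interpret T: two_spvm smul ip E2 E U by (rule two_spvm_sym) unfold_locales
  have "(norm (E2 F x))\<^sup>2 = (norm (E F x))\<^sup>2"
    using closed_le[OF Fc FS, of x] T.closed_le[OF Fc FS, of x] by simp
  thus ?thesis by (simp add: power2_eq_iff_nonneg)
qed

lemma uniq:
  assumes A: "A \<in> sets circle_borel"
  shows "norm (E2 A w) = norm (E A w)"
proof -
  define \<nu>1 where "\<nu>1 = distr (spec_meas ip E w) borel (\<lambda>\<xi>. \<xi>)"
  define \<nu>2 where "\<nu>2 = distr (spec_meas ip E2 w) borel (\<lambda>\<xi>. \<xi>)"
  have m1: "(\<lambda>\<xi>. \<xi>) \<in> measurable (spec_meas ip E w) borel"
    by (subst measurable_cong_sets[OF S1.sm_sets refl]) (rule measurable_restrict_space1[OF measurable_id])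
  have m2: "(\<lambda>\<xi>. \<xi>) \<in> measurable (spec_meas ip E2 w) borel"
    by (subst measurable_cong_sets[OF S2.sm_sets refl]) (rule measurable_restrict_space1[OF measurable_id])
  have e1: "emeasure \<nu>1 K = ennreal ((norm (E (K \<inter> SS) w))\<^sup>2)" if "K \<in> sets borel" for K
  proof -
    have "K \<inter> SS \<in> sets circle_borel" using that BB_iff by auto
    thus ?thesis unfolding \<nu>1_def using that
      by (simp add: emeasure_distr[OF m1] S1.sm_emeasure Int_commute)
  qed
  have e2: "emeasure \<nu>2 K = ennreal ((norm (E2 (K \<inter> SS) w))\<^sup>2)" if "K \<in> sets borel" for K
  proof -
    have "K \<inter> SS \<in> sets circle_borel" using that BB_iff by auto
    thus ?thesis unfolding \<nu>2_def using that
      by (simp add: emeasure_distr[OF m2] S2.sm_emeasure Int_commute)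
  qed
  have s1: "sets \<nu>1 = sets borel" "sets \<nu>2 = sets borel" by (simp_all add: \<nu>1_def \<nu>2_def)
  have sp: "space \<nu>1 = UNIV" "space \<nu>2 = UNIV" by (simp_all add: \<nu>1_def \<nu>2_def)
  have f1: "emeasure \<nu>1 (space \<nu>1) \<noteq> \<infinity>" using e1[of UNIV] sp by simp
  have f2: "emeasure \<nu>2 (space \<nu>2) \<noteq> \<infinity>" using e2[of UNIV] sp by simp
  have Ab: "A \<in> sets borel" and AS: "A \<subseteq> SS" using A BB_iff by auto
  have kc: "emeasure \<nu>1 K = emeasure \<nu>2 K" if "compact K" for K
  proof -
    have "closed (K \<inter> SS)" using that by (intro closed_Int compact_imp_closed) auto
    hence "norm (E2 (K \<inter> SS) w) = norm (E (K \<inter> SS) w)" by (rule closed_eq) auto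
    moreover have "K \<in> sets borel" using that by (simp add: borel_compact)
    ultimately show ?thesis using e1 e2 by simp
  qed
  have "emeasure \<nu>1 A = (SUP K \<in> {K. K \<subseteq> A \<and> compact K}. emeasure \<nu>1 K)"
    by (rule inner_regular[OF s1(1) f1 Ab])
  also have "\<dots> = (SUP K \<in> {K. K \<subseteq> A \<and> compact K}. emeasure \<nu>2 K)"
    using kc by (intro SUP_cong) auto
  also have "\<dots> = emeasure \<nu>2 A"
    by (rule inner_regular[OF s1(2) f2 Ab, symmetric])
  finally have "ennreal ((norm (E A w))\<^sup>2) = ennreal ((norm (E2 A w))\<^sup>2)"
    using e1[OF Ab] e2[OF Ab] AS by (simp add: Int_absorb2)
  hence "(norm (E A w))\<^sup>2 = (norm (E2 A w))\<^sup>2" by (simp add: ennreal_inj)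
  thus ?thesis by (simp add: power2_eq_iff_nonneg)
qed

end

lemma cnj_image_eq: "cnj ` A = cnj -` A"
  by (auto simp: image_iff) (metis complex_cnj_cnj)

lemma cnj_image_cnj[simp]: "cnj ` (cnj ` A) = A"
  by (simp add: image_image)

lemma cnj_BB: assumes "A \<in> sets circle_borel" shows "cnj ` A \<in> sets circle_borel"
proof -
  have A: "A \<subseteq> SS" "A \<in> sets borel" using assms BB_iff by auto
  have "cnj \<in> borel_measurable borel" by (intro borel_measurable_continuous_onI continuous_intros)
  hence "cnj -` A \<inter> space borel \<in> sets borel" using A(2) by (rule measurable_sets)
  hence "cnj -` A \<in> sets borel" by simp
  moreover have "cnj ` A \<subseteq> SS" using A(1) by auto
  ultimately show ?thesis using BB_iff cnj_image_eq by metis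
qed

lemma cnj_SS[simp]: "cnj ` SS = SS"
proof
  show "cnj ` SS \<subseteq> SS" by auto
  show "SS \<subseteq> cnj ` SS"
  proof
    fix x :: complex assume "x \<in> SS"
    hence "cnj x \<in> SS" by simp
    thus "x \<in> cnj ` SS" by (metis complex_cnj_cnj imageI)
  qed
qed

lemma cnj_meas: "cnj \<in> measurable circle_borel circle_borel"
proof (rule measurableI)
  show "cnj x \<in> space circle_borel" if "x \<in> space circle_borel" for x using that by simp
  fix A assume A: "A \<in> sets circle_borel"
  hence "A \<subseteq> SS" using BB_iff by auto
  hence "cnj -` A \<inter> space circle_borel = cnj ` A" by (auto simp: cnj_image_eq)
  thus "cnj -` A \<inter> space circle_borel \<in> sets circle_borel" using cnj_BB[OF A] by simp
qed

lemma leb_decomp: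
  fixes M \<nu> :: "'a measure"
  assumes sets: "sets \<nu> = sets M" and fin: "finite_measure \<nu>"
  shows "\<exists>N\<in>null_sets M. \<forall>A\<in>null_sets M. emeasure \<nu> (A - N) = 0"
proof -
  interpret finite_measure \<nu> by (rule fin)
  define s where "s = (SUP N\<in>null_sets M. measure \<nu> N)"
  have ne: "null_sets M \<noteq> {}" by auto
  have bdd: "bdd_above ((\<lambda>N. measure \<nu> N) ` null_sets M)"
    by (rule bdd_aboveI[where M = "measure \<nu> (space \<nu>)"]) (auto intro!: bounded_measure)
  have "\<forall>n::nat. \<exists>N\<in>null_sets M. s - 1 / Suc n < measure \<nu> N"
  proof
    fix n :: nat
    have "s - 1 / Suc n < s" by simp
    thus "\<exists>N\<in>null_sets M. s - 1 / Suc n < measure \<nu> N"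
      unfolding s_def by (subst (asm) less_cSUP_iff[OF ne bdd]) auto
  qed
  then obtain Nf where Nf: "\<And>n. Nf n \<in> null_sets M" "\<And>n. s - 1 / Suc n < measure \<nu> (Nf n)"
    by metis
  define N where "N = (\<Union>n. Nf n)"
  have N: "N \<in> null_sets M" unfolding N_def using Nf(1) by auto
  have Ns: "N \<in> sets \<nu>" using N sets by (auto simp: null_sets_def)
  have ge: "s \<le> measure \<nu> N"
  proof (rule ccontr)
    assume "\<not> s \<le> measure \<nu> N"
    hence "0 < s - measure \<nu> N" by simp
    then obtain n where n: "inverse (real (Suc n)) < s - measure \<nu> N" using reals_Archimedean by blast
    have "Nf n \<subseteq> N" by (auto simp: N_def)
    hence "measure \<nu> (Nf n) \<le> measure \<nu> N"
      using Nf(1)[of n] sets Ns by (intro finite_measure_mono) (auto simp: null_sets_def)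
    thus False using Nf(2)[of n] n by (simp add: inverse_eq_divide)
  qed
  have "emeasure \<nu> (A - N) = 0" if A: "A \<in> null_sets M" for A
  proof -
    have "N \<union> A \<in> null_sets M" using N A by auto
    hence le: "measure \<nu> (N \<union> A) \<le> s" unfolding s_def by (intro cSUP_upper[OF _ bdd])
    have As: "A - N \<in> sets \<nu>" using A Ns sets by (auto simp: null_sets_def)
    have "measure \<nu> (N \<union> A) = measure \<nu> N + measure \<nu> (A - N)"
    proof -
      have "N \<union> A = N \<union> (A - N)" by blast
      thus ?thesis using finite_measure_Union[OF Ns As] by simp
    qed
    hence "measure \<nu> (A - N) = 0" using le ge measure_nonneg[of \<nu> "A - N"] by linarith
    thus ?thesis using As by (simp add: emeasure_eq_measure)
  qed
  thus ?thesis using N by blast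
qed

locale main = spvm smul ip E U for smul :: "complex \<Rightarrow> 'h::banach \<Rightarrow> 'h" and ip E U +
  fixes C :: "'h \<Rightarrow> 'h"
  assumes conj: "conjugation smul C" and CUC: "C \<circ> U \<circ> C = U"
begin

lemma C_add: "C (x + y) = C x + C y" and C_smul: "C (smul a x) = smul (cnj a) (C x)"
  and C_norm: "norm (C x) = norm x" and C_inv[simp]: "C (C x) = x"
  using conj unfolding conjugation_def by blast+

lemma C_ip: "ip (C x) (C y) = cnj (ip x y)"
  by (rule conj_ip[OF conjugation_antiisom[OF conj]])

lemma C_zero[simp]: "C 0 = 0" using C_add[of 0 0] by simp

lemma C_inj: "inj C" by (metis C_inv injI)

lemma C_cont: "continuous_on UNIV C"
proof -
  have C_minus: "C (- x) = - C x" for x using C_add[of x "-x"] by (metis C_zero minus_unique right_minus)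
  have "C x - C y = C (x - y)" for x y using C_add[of x "-y"] C_minus[of y] by simp
  hence "dist (C x) (C y) = dist x y" for x y by (simp add: dist_norm C_norm)
  thus ?thesis unfolding continuous_on_iff by (metis UNIV_I)
qed

lemma CU: "U (C x) = C (U x)"
proof -
  have "C (U (C y)) = U y" for y using CUC by (metis comp_apply)
  from this[of x] have "C (C (U (C x))) = C (U x)" by simp
  thus ?thesis by simp
qed

definition E' :: "complex set \<Rightarrow> 'h \<Rightarrow> 'h" where "E' A = (\<lambda>x. C (E (cnj ` A) (C x)))"

lemma E'_pvm: "pv_measure smul ip E'"
  unfolding pv_measure_def
proof (intro conjI ballI allI impI)
  fix A assume A: "A \<in> sets circle_borel"
  have P: "orth_projection smul ip (E (cnj ` A))" by (rule E_proj[OF cnj_BB[OF A]])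
  show "orth_projection smul ip (E' A)"
    unfolding orth_projection_def clinear_map_def E'_def
  proof (intro conjI allI)
    fix x y :: 'h and a
    show "C (E (cnj ` A) (C (x + y))) = C (E (cnj ` A) (C x)) + C (E (cnj ` A) (C y))"
      by (simp add: C_add proj_add[OF P])
    show "C (E (cnj ` A) (C (smul a x))) = smul a (C (E (cnj ` A) (C x)))"
      by (simp add: C_smul proj_smul[OF P])
    show "C (E (cnj ` A) (C (C (E (cnj ` A) (C x))))) = C (E (cnj ` A) (C x))"
      by (simp add: proj_idem[OF P])
    have "ip (C (E (cnj ` A) (C x))) y = ip (C (E (cnj ` A) (C x))) (C (C y))" by simp
    also have "\<dots> = cnj (ip (E (cnj ` A) (C x)) (C y))" by (rule C_ip)
    also have "\<dots> = cnj (ip (C x) (E (cnj ` A) (C y)))" by (simp add: proj_sa[OF P])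
    also have "\<dots> = ip (C (C x)) (C (E (cnj ` A) (C y)))" by (rule C_ip[symmetric])
    finally show "ip (C (E (cnj ` A) (C x))) y = ip x (C (E (cnj ` A) (C y)))" by simp
  qed
next
  show "E' {} = (\<lambda>x. 0)" by (simp add: E'_def)
  show "E' SS = id" by (simp add: E'_def fun_eq_iff)
next
  fix A B assume A: "A \<in> sets circle_borel" and B: "B \<in> sets circle_borel"
  have "cnj ` (A \<inter> B) = cnj ` A \<inter> cnj ` B" by (rule image_Int) (simp add: inj_on_def)
  thus "E' (A \<inter> B) = E' A \<circ> E' B"
    by (simp add: E'_def fun_eq_iff E_Int[OF cnj_BB[OF A] cnj_BB[OF B]])
next
  fix F :: "nat \<Rightarrow> complex set" and x
  assume r: "range F \<subseteq> sets circle_borel" and d: "disjoint_family F"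
  have r': "range (\<lambda>n. cnj ` F n) \<subseteq> sets circle_borel" using r cnj_BB by auto
  have d': "disjoint_family (\<lambda>n. cnj ` F n)"
    using d unfolding disjoint_family_on_def by (auto simp: image_iff) (metis complex_cnj_cnj IntI empty_iff)
  have "(\<lambda>n. E (cnj ` F n) (C x)) sums E (\<Union>n. cnj ` F n) (C x)" by (rule E_sums[OF r' d'])
  hence "(\<lambda>n. C (E (cnj ` F n) (C x))) sums C (E (\<Union>n. cnj ` F n) (C x))"
    by (rule sums_additive_cont[OF C_add C_cont])
  moreover have "(\<Union>n. cnj ` F n) = cnj ` (\<Union>n. F n)" by blast
  ultimately show "(\<lambda>n. E' (F n) x) sums E' (\<Union>n. F n) x" by (simp add: E'_def)
qed

end

context main begin

lemma E'_pvm_loc: "pvm smul ip E'"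
  by unfold_locales (rule E'_pvm)

lemma cnjm: "cnj \<in> measurable (spec_meas ip E w) circle_borel"
  by (subst measurable_cong_sets[OF sm_sets refl]) (rule cnj_meas)

lemma sm_E'_distr: "spec_meas ip E' x = distr (spec_meas ip E (C x)) circle_borel cnj"
proof -
  interpret P': pvm smul ip E' by (rule E'_pvm_loc)
  show ?thesis
  proof (rule measure_eqI)
    show "sets (spec_meas ip E' x) = sets (distr (spec_meas ip E (C x)) circle_borel cnj)" by simp
    fix A assume "A \<in> sets (spec_meas ip E' x)"
    hence A: "A \<in> sets circle_borel" by simp
    hence AS: "A \<subseteq> SS" using BB_iff by auto
    have "emeasure (spec_meas ip E' x) A = ennreal ((norm (E (cnj ` A) (C x)))\<^sup>2)"
      by (simp add: P'.sm_emeasure[OF A] E'_def C_norm)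
    also have "\<dots> = emeasure (spec_meas ip E (C x)) (cnj ` A)"
      by (simp add: sm_emeasure[OF cnj_BB[OF A]])
    also have "cnj ` A = cnj -` A \<inter> space (spec_meas ip E (C x))"
      using AS by (auto simp: cnj_image_eq)
    also have "emeasure (spec_meas ip E (C x)) \<dots> = emeasure (distr (spec_meas ip E (C x)) circle_borel cnj) A"
      by (rule emeasure_distr[OF cnjm A, symmetric])
    finally show "emeasure (spec_meas ip E' x) A = emeasure (distr (spec_meas ip E (C x)) circle_borel cnj) A" .
  qed
qed

lemma E'_spec: "ip (U x) x = (\<integral>\<xi>. \<xi> \<partial>spec_meas ip E' x)"
proof -
  have idm: "(\<lambda>\<xi>::complex. \<xi>) \<in> borel_measurable circle_borel"
    by (rule measurable_restrict_space1[OF measurable_id])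
  have "(\<integral>\<xi>. \<xi> \<partial>spec_meas ip E' x) = (\<integral>\<xi>. cnj \<xi> \<partial>spec_meas ip E (C x))"
    unfolding sm_E'_distr by (rule integral_distr[OF cnjm idm])
  also have "\<dots> = cnj (ip (U (C x)) (C x))" by (simp add: specU)
  also have "\<dots> = ip (U x) x" by (simp add: CU C_ip)
  finally show ?thesis ..
qed

lemma two: "two_spvm smul ip E E' U"
  by unfold_locales (auto intro: E'_pvm E'_spec unit pvm specU)

lemma norm_EC: "A \<in> sets circle_borel \<Longrightarrow> norm (E A (C x)) = norm (E (cnj ` A) x)"
proof -
  assume A: "A \<in> sets circle_borel"
  interpret T: two_spvm smul ip E E' U by (rule two)
  have "norm (E' A (C x)) = norm (E A (C x))" by (rule T.uniq[OF A])
  thus ?thesis by (simp add: E'_def C_norm)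
qed

lemma sm_C: "A \<in> sets circle_borel \<Longrightarrow> emeasure (spec_meas ip E (C x)) A = emeasure (spec_meas ip E x) (cnj ` A)"
  by (simp add: sm_emeasure cnj_BB norm_EC)

lemma cm_sets: "sets M = sets circle_borel \<Longrightarrow> sets (conj_measure M) = sets circle_borel"
  by (simp add: conj_measure_def)

lemma cm_emeasure:
  assumes M: "sets M = sets circle_borel" and A: "A \<in> sets circle_borel"
  shows "emeasure (conj_measure M) A = emeasure M (cnj ` A)"
proof -
  have sp: "space M = SS" using sets_eq_imp_space_eq[OF M] by simp
  have cm: "cnj \<in> measurable M M"
    by (subst measurable_cong_sets[OF M M]) (rule cnj_meas)
  have AS: "A \<subseteq> SS" using A BB_iff by auto
  have "emeasure (conj_measure M) A = emeasure M (cnj -` A \<inter> space M)"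
    unfolding conj_measure_def by (rule emeasure_distr[OF cm]) (simp add: M A)
  also have "cnj -` A \<inter> space M = cnj ` A" using AS sp by (auto simp: cnj_image_eq)
  finally show ?thesis .
qed

lemma H_C1:
  assumes M: "sets M = sets circle_borel" and x: "x \<in> H_sub ip E M"
  shows "C x \<in> H_sub ip E (conj_measure M)"
  unfolding H_sub_def absolutely_continuous_def
proof (safe)
  fix N assume N: "N \<in> null_sets (conj_measure M)"
  hence Nb: "N \<in> sets circle_borel" and N0: "emeasure (conj_measure M) N = 0"
    using cm_sets[OF M] by (auto simp: null_sets_def)
  have "cnj ` N \<in> null_sets M" using N0 cm_emeasure[OF M Nb] cnj_BB[OF Nb] M by (simp add: null_sets_def)
  hence "cnj ` N \<in> null_sets (spec_meas ip E x)" using x by (auto simp: H_sub_def absolutely_continuous_def)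
  hence "emeasure (spec_meas ip E (C x)) N = 0" using sm_C[OF Nb] by (simp add: null_sets_def)
  thus "N \<in> null_sets (spec_meas ip E (C x))" using Nb by (simp add: null_sets_def)
qed

lemma H_C2:
  assumes M: "sets M = sets circle_borel" and y: "y \<in> H_sub ip E (conj_measure M)"
  shows "C y \<in> H_sub ip E M"
  unfolding H_sub_def absolutely_continuous_def
proof (safe)
  fix N assume N: "N \<in> null_sets M"
  hence Nb: "N \<in> sets circle_borel" and N0: "emeasure M N = 0"
    using M by (auto simp: null_sets_def)
  have "emeasure (conj_measure M) (cnj ` N) = 0" using cm_emeasure[OF M cnj_BB[OF Nb]] N0 by simp
  hence "cnj ` N \<in> null_sets (conj_measure M)" using cnj_BB[OF Nb] cm_sets[OF M] by (simp add: null_sets_def)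
  hence "cnj ` N \<in> null_sets (spec_meas ip E y)" using y by (auto simp: H_sub_def absolutely_continuous_def)
  hence "emeasure (spec_meas ip E (C y)) N = 0" using sm_C[OF Nb] by (simp add: null_sets_def)
  thus "N \<in> null_sets (spec_meas ip E (C y))" using Nb by (simp add: null_sets_def)
qed

lemma H_image:
  assumes M: "sets M = sets circle_borel"
  shows "C ` H_sub ip E M = H_sub ip E (conj_measure M)"
proof
  show "C ` H_sub ip E M \<subseteq> H_sub ip E (conj_measure M)" using H_C1[OF M] by auto
  show "H_sub ip E (conj_measure M) \<subseteq> C ` H_sub ip E M"
  proof
    fix y assume "y \<in> H_sub ip E (conj_measure M)"
    hence "C y \<in> H_sub ip E M" by (rule H_C2[OF M])
    thus "y \<in> C ` H_sub ip E M" by (metis C_inv imageI)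
  qed
qed

lemma orth_image: "C ` orth_compl ip S = orth_compl ip (C ` S)"
proof
  show "C ` orth_compl ip S \<subseteq> orth_compl ip (C ` S)"
    by (auto simp: orth_compl_def C_ip)
  show "orth_compl ip (C ` S) \<subseteq> C ` orth_compl ip S"
  proof
    fix w assume w: "w \<in> orth_compl ip (C ` S)"
    have "C w \<in> orth_compl ip S"
      unfolding orth_compl_def
    proof safe
      fix x assume "x \<in> S"
      hence "ip (C x) w = 0" using w by (auto simp: orth_compl_def)
      thus "ip x (C w) = 0" using C_ip[of x "C w"] by simp
    qed
    thus "w \<in> C ` orth_compl ip S" by (metis C_inv imageI)
  qed
qed

lemma decomp:
  assumes M: "sets M = sets circle_borel"
  shows "\<exists>y\<in>H_sub ip E M. \<exists>z\<in>orth_compl ip (H_sub ip E M). x = y + z \<and> C x = C y + C z"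
proof -
  obtain N where N: "N \<in> null_sets M" and Nd: "\<And>A. A \<in> null_sets M \<Longrightarrow> emeasure (spec_meas ip E x) (A - N) = 0"
    using leb_decomp[of "spec_meas ip E x" M] M sm_finite by auto
  have Nb: "N \<in> sets circle_borel" using N M by (auto simp: null_sets_def)
  have NbC: "SS - N \<in> sets circle_borel" using Nb by auto
  define y where "y = E (SS - N) x"
  define z where "z = E N x"
  have xyz: "x = y + z" by (simp add: y_def z_def E_compl[OF Nb])
  have yH: "y \<in> H_sub ip E M"
  proof (unfold H_sub_def absolutely_continuous_def, intro CollectI subsetI)
    fix A assume A: "A \<in> null_sets M"
    hence Ab: "A \<in> sets circle_borel" using M by (auto simp: null_sets_def)
    hence AS: "A \<subseteq> SS" using BB_iff by auto
    have ANb: "A - N \<in> sets circle_borel" using Ab Nb by auto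
    have "A \<inter> (SS - N) = A - N" using AS by blast
    hence "emeasure (spec_meas ip E y) A = emeasure (spec_meas ip E x) (A - N)"
      by (simp add: y_def sm_emeasure Ab ANb E_Int[OF Ab NbC, symmetric])
    also have "\<dots> = 0" by (rule Nd[OF A])
    finally show "A \<in> null_sets (spec_meas ip E y)" using Ab by (simp add: null_sets_def)
  qed
  have zH: "z \<in> orth_compl ip (H_sub ip E M)"
    unfolding orth_compl_def
  proof safe
    fix w assume w: "w \<in> H_sub ip E M"
    hence "N \<in> null_sets (spec_meas ip E w)" using N by (auto simp: H_sub_def absolutely_continuous_def)
    hence "ennreal ((norm (E N w))\<^sup>2) = 0" using sm_emeasure[OF Nb, of w] by (simp add: null_sets_def)
    hence "E N w = 0" by simp
    thus "ip w z = 0" by (simp add: z_def proj_sa[OF E_proj[OF Nb], symmetric])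
  qed
  show ?thesis using yH zH xyz C_add by blast
qed

end

theorem theorem4p5:
  fixes smul :: "complex \<Rightarrow> 'h::banach \<Rightarrow> 'h"
    and ip :: "'h \<Rightarrow> 'h \<Rightarrow> complex"
    and U C :: "'h \<Rightarrow> 'h"
    and E :: "complex set \<Rightarrow> 'h \<Rightarrow> 'h"
    and M :: "complex measure"
  assumes hilb: "complex_hilbert smul ip"
    and sep: "separable_hspace TYPE('h)"
    and unit: "unitary_op smul ip U"
    and spec: "spectral_measure_of smul ip U E"
    and M_sets: "sets M = sets circle_borel"
    and M_fin: "finite_measure M"
    and conj: "conjugation smul C"
    and CUC: "C \<circ> U \<circ> C = U"
  shows "C ` H_sub ip E M = H_sub ip E (conj_measure M)
       \<and> C ` orth_compl ip (H_sub ip E M) = orth_compl ip (H_sub ip E (conj_measure M))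
       \<and> bij_betw C (H_sub ip E M) (H_sub ip E (conj_measure M))
       \<and> bij_betw C (orth_compl ip (H_sub ip E M)) (orth_compl ip (H_sub ip E (conj_measure M)))
       \<and> (\<forall>x. \<exists>y\<in>H_sub ip E M. \<exists>z\<in>orth_compl ip (H_sub ip E M). x = y + z \<and> C x = C y + C z)"
proof -
  have sp: "pv_measure smul ip E" and sU: "\<And>x. ip (U x) x = (\<integral>\<xi>. \<xi> \<partial>(spec_meas ip E x))"
    using spec unfolding spectral_measure_of_def by blast+
  interpret mn: main smul ip E U C
    by unfold_locales (use hilb unit sp sU conj CUC in auto)
  have H: "C ` H_sub ip E M = H_sub ip E (conj_measure M)" by (rule mn.H_image[OF M_sets])
  have O: "C ` orth_compl ip (H_sub ip E M) = orth_compl ip (H_sub ip E (conj_measure M))"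
    by (simp add: mn.orth_image H)
  have inj: "inj_on C X" for X by (meson mn.C_inj inj_on_subset subset_UNIV)
  have B1: "bij_betw C (H_sub ip E M) (H_sub ip E (conj_measure M))"
    unfolding bij_betw_def using inj H by blast
  have B2: "bij_betw C (orth_compl ip (H_sub ip E M)) (orth_compl ip (H_sub ip E (conj_measure M)))"
    unfolding bij_betw_def using inj O by blast
  show ?thesis using H O B1 B2 mn.decomp[OF M_sets] by blast
qed

end
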